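(* Let $\mathcal P$ be as in the context. Let $\mathcal P'$ be the set of $(\mathbf x',\mathbf y')=((x'_1,\dots,x'_T),(y'_1,\dots,y'_T))\in\mathbb R_+^T\times\{0,1\}^T$ satisfying: $-y'_{T-t+2}+y'_{T-t+1}-y'_{T-k+1}\le 0$ for all $t\in[2,T]_{\mathbb Z}$, $k\in[t,\min\{T,t+L-1\}]_{\mathbb Z}$; $y'_{T-t+2}-y'_{T-t+1}+y'_{T-k+1}\le 1$ for all $t\in[2,T]_{\mathbb Z}$, $k\in[t,\min\{T,t+\ell-1\}]_{\mathbb Z}$; $-x'_{T-t+1}+\underline C y'_{T-t+1}\le 0$ and $x'_{T-t+1}-\overline C y'_{T-t+1}\le 0$ for all $t\in[1,T]_{\mathbb Z}$; $x'_{T-t+1}-x'_{T-t+2}\le Vy'_{T-t+2}+\overline V(1-y'_{T-t+2})$ for all $t\in[2,T]_{\mathbb Z}$; $x'_{T-t+2}-x'_{T-t+1}\le Vy'_{T-t+1}+\overline V(1-y'_{T-t+1})$ for all $t\in[2,T]_{\mathbb Z}$. Then $\mathcal P=\mathcal P'$ (as subsets of $\mathbb R^{T}\times\mathbb R^{T}$).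
   Context: For integers $a,b$, $[a,b]_{\mathbb Z}=\{a,a+1,\dots,b\}$ if $a\le b$ and $\emptyset$ otherwise. Fix a positive integer $T$, positive integers $L$ (minimum up time) and $\ell$ (minimum down time), and reals $\overline C,\underline C,V,\overline V$ with $\overline C>\underline C>0$, $V>0$, $\overline V+V\le\overline C$ and $\underline C<\overline V<\underline C+V$. $\mathcal P$ is the set of $(\mathbf x,\mathbf y)=((x_1,\dots,x_T),(y_1,\dots,y_T))\in\mathbb R_+^T\times\{0,1\}^T$ satisfying: (i) $-y_{t-1}+y_t-y_k\le 0$ for all $t\in[2,T]_{\mathbb Z}$, $k\in[t,\min\{T,t+L-1\}]_{\mathbb Z}$; (ii) $y_{t-1}-y_t+y_k\le 1$ for all $t\in[2,T]_{\mathbb Z}$, $k\in[t,\min\{T,t+\ell-1\}]_{\mathbb Z}$; (iii) $-x_t+\underline C y_t\le 0$ and $x_t-\overline C y_t\le 0$ for all $t\in[1,T]_{\mathbb Z}$; (iv) $x_t-x_{t-1}\le Vy_{t-1}+\overline V(1-y_{t-1})$ for all $t\in[2,T]_{\mathbb Z}$; (v) $x_{t-1}-x_t\le Vy_t+\overline V(1-y_t)$ for all $t\in[2,T]_{\mathbb Z}$. *)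

theory Defs
  imports Main "HOL.Real"
begin

text \<open>Vectors in R^T are represented as functions nat \<Rightarrow> real, only the
  components 1..T matter (no constraint is imposed outside 1..T).\<close>

definition polP :: "nat \<Rightarrow> nat \<Rightarrow> nat \<Rightarrow> real \<Rightarrow> real \<Rightarrow> real \<Rightarrow> real \<Rightarrow>
    ((nat \<Rightarrow> real) \<times> (nat \<Rightarrow> real)) set" where
  "polP T L l Cup Clo V Vup = {(x, y).
     (\<forall>t\<in>{1..T}. x t \<ge> 0 \<and> y t \<in> {0, 1}) \<and>
     (\<forall>t\<in>{2..T}. \<forall>k\<in>{t..min T (t + L - 1)}. - y (t - 1) + y t - y k \<le> 0) \<and>
     (\<forall>t\<in>{2..T}. \<forall>k\<in>{t..min T (t + l - 1)}. y (t - 1) - y t + y k \<le> 1) \<and>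
     (\<forall>t\<in>{1..T}. - x t + Clo * y t \<le> 0 \<and> x t - Cup * y t \<le> 0) \<and>
     (\<forall>t\<in>{2..T}. x t - x (t - 1) \<le> V * y (t - 1) + Vup * (1 - y (t - 1))) \<and>
     (\<forall>t\<in>{2..T}. x (t - 1) - x t \<le> V * y t + Vup * (1 - y t))}"

definition polP' :: "nat \<Rightarrow> nat \<Rightarrow> nat \<Rightarrow> real \<Rightarrow> real \<Rightarrow> real \<Rightarrow> real \<Rightarrow>
    ((nat \<Rightarrow> real) \<times> (nat \<Rightarrow> real)) set" where
  "polP' T L l Cup Clo V Vup = {(x', y').
     (\<forall>t\<in>{1..T}. x' t \<ge> 0 \<and> y' t \<in> {0, 1}) \<and>
     (\<forall>t\<in>{2..T}. \<forall>k\<in>{t..min T (t + L - 1)}.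
        - y' (T - t + 2) + y' (T - t + 1) - y' (T - k + 1) \<le> 0) \<and>
     (\<forall>t\<in>{2..T}. \<forall>k\<in>{t..min T (t + l - 1)}.
        y' (T - t + 2) - y' (T - t + 1) + y' (T - k + 1) \<le> 1) \<and>
     (\<forall>t\<in>{1..T}. - x' (T - t + 1) + Clo * y' (T - t + 1) \<le> 0 \<and>
        x' (T - t + 1) - Cup * y' (T - t + 1) \<le> 0) \<and>
     (\<forall>t\<in>{2..T}. x' (T - t + 1) - x' (T - t + 2)
        \<le> V * y' (T - t + 2) + Vup * (1 - y' (T - t + 2))) \<and>
     (\<forall>t\<in>{2..T}. x' (T - t + 2) - x' (T - t + 1)
        \<le> V * y' (T - t + 1) + Vup * (1 - y' (T - t + 1)))}"

end

theory Submission
  imports Defs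
begin

lemma reidx1: "(\<forall>t\<in>{1..T}. P (T-t+1)) \<longleftrightarrow> (\<forall>t\<in>{1..(T::nat)}. P t)"
proof
  assume h: "\<forall>t\<in>{1..T}. P (T-t+1)"
  show "\<forall>t\<in>{1..T}. P t"
  proof
    fix t assume t: "t \<in> {1..T}"
    hence "T - t + 1 \<in> {1..T}" by auto
    with h have "P (T - (T-t+1) + 1)" by blast
    moreover have "T - (T-t+1) + 1 = t" using t by auto
    ultimately show "P t" by simp
  qed
next
  assume h: "\<forall>t\<in>{1..T}. P t"
  show "\<forall>t\<in>{1..T}. P (T-t+1)" using h by auto
qed

lemma reidx2: "(\<forall>t\<in>{2..T}. P (T-t+1) (T-t+2)) \<longleftrightarrow> (\<forall>t\<in>{2..(T::nat)}. P (t-1) t)"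
proof
  assume h: "\<forall>t\<in>{2..T}. P (T-t+1) (T-t+2)"
  show "\<forall>t\<in>{2..T}. P (t-1) t"
  proof
    fix t assume t: "t \<in> {2..T}"
    hence "T - t + 2 \<in> {2..T}" by auto
    with h have "P (T - (T-t+2) + 1) (T - (T-t+2) + 2)" by blast
    moreover have "T - (T-t+2) + 1 = t - 1" "T - (T-t+2) + 2 = t" using t by auto
    ultimately show "P (t-1) t" by simp
  qed
next
  assume h: "\<forall>t\<in>{2..T}. P (t-1) t"
  show "\<forall>t\<in>{2..T}. P (T-t+1) (T-t+2)"
  proof
    fix t assume t: "t \<in> {2..T}"
    hence "T - t + 2 \<in> {2..T}" by auto
    with h have "P (T - t + 2 - 1) (T-t+2)" by blast
    moreover have "T - t + 2 - 1 = T - t + 1" using t by auto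
    ultimately show "P (T-t+1) (T-t+2)" by simp
  qed
qed

lemma fwd_bwd:
  fixes p :: "nat \<Rightarrow> bool"
  assumes f: "\<forall>t k. 2\<le>t \<longrightarrow> t\<le>T \<longrightarrow> t\<le>k \<longrightarrow> k\<le>T \<longrightarrow> k+1 \<le> t+L \<longrightarrow> \<not>p(t-1) \<longrightarrow> p t \<longrightarrow> p k"
  shows "\<forall>s j. 1\<le>j \<longrightarrow> j\<le>s \<longrightarrow> s<T \<longrightarrow> s+1 \<le> j+L \<longrightarrow> p s \<longrightarrow> \<not>p(s+1) \<longrightarrow> p j"
proof (intro allI impI, rule ccontr)
  fix s j assume a: "1\<le>j" "j\<le>s" "s<T" "s+1 \<le> j+L" "p s" "\<not>p(s+1)" "\<not> p j"
  define t where "t = (LEAST t. j < t \<and> p t)"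
  have ex: "j < s \<and> p s" using a by (cases "j = s") auto
  have t1: "j < t \<and> p t" unfolding t_def by (rule LeastI, rule ex)
  have t2: "t \<le> s" unfolding t_def by (rule Least_le, rule ex)
  have t3: "\<not> p (t-1)"
  proof (cases "t - 1 = j")
    case True then show ?thesis using a by simp
  next
    case False
    hence "j < t - 1" using t1 by auto
    moreover have "t - 1 < t" using t1 by auto
    ultimately show ?thesis using not_less_Least[of "t-1" "\<lambda>t. j < t \<and> p t"] unfolding t_def
      by (metis t_def)
  qed
  have "p (s+1)" using f[rule_format, of t "s+1"] t1 t2 t3 a by auto
  with a show False by simp
qed

lemma bwd_fwd:
  fixes p :: "nat \<Rightarrow> bool"
  assumes b: "\<forall>s j. 1\<le>j \<longrightarrow> j\<le>s \<longrightarrow> s<T \<longrightarrow> s+1 \<le> j+L \<longrightarrow> p s \<longrightarrow> \<not>p(s+1) \<longrightarrow> p j"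
  shows "\<forall>t k. 2\<le>t \<longrightarrow> t\<le>T \<longrightarrow> t\<le>k \<longrightarrow> k\<le>T \<longrightarrow> k+1 \<le> t+L \<longrightarrow> \<not>p(t-1) \<longrightarrow> p t \<longrightarrow> p k"
proof (intro allI impI, rule ccontr)
  fix t k assume a: "2\<le>t" "t\<le>T" "t\<le>k" "k\<le>T" "k+1 \<le> t+L" "\<not>p(t-1)" "p t" "\<not> p k"
  define m where "m = (LEAST m. t \<le> m \<and> \<not> p m)"
  have ex: "t \<le> k \<and> \<not> p k" using a by auto
  have m1: "t \<le> m \<and> \<not> p m" unfolding m_def by (rule LeastI, rule ex)
  have m2: "m \<le> k" unfolding m_def by (rule Least_le, rule ex)
  have m0: "t < m" using m1 a by (cases "m = t") auto
  have m3: "p (m-1)"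
  proof -
    have "\<not> (t \<le> m - 1 \<and> \<not> p (m-1))"
      using not_less_Least[of "m-1" "\<lambda>m. t \<le> m \<and> \<not> p m"] m0 unfolding m_def[symmetric] by auto
    thus ?thesis using m0 by auto
  qed
  have "p (t-1)" using b[rule_format, of "t-1" "m-1"] m0 m1 m2 m3 a by auto
  with a show False by simp
qed


lemma key01: "a\<in>{0,1} \<Longrightarrow> b\<in>{0,1} \<Longrightarrow> c\<in>{0,1} \<Longrightarrow>
   (-a+b-c \<le> (0::real)) \<longleftrightarrow> (\<not> a=1 \<and> b=1 \<longrightarrow> c=1)" by auto

lemma minup_real:
  fixes y :: "nat \<Rightarrow> real"
  assumes y01: "\<forall>t\<in>{1..T}. y t \<in> {0,1}" and L: "L > 0"
  shows "(\<forall>t\<in>{2..T}. \<forall>k\<in>{t..min T (t + L - 1)}. - y (t - 1) + y t - y k \<le> 0) \<longleftrightarrow>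
    (\<forall>t\<in>{2..T}. \<forall>k\<in>{t..min T (t + L - 1)}. - y (T - t + 2) + y (T - t + 1) - y (T - k + 1) \<le> 0)"
proof -
  define p where "p t = (y t = 1)" for t
  have A: "(\<forall>t\<in>{2..T}. \<forall>k\<in>{t..min T (t + L - 1)}. - y (t - 1) + y t - y k \<le> 0) \<longleftrightarrow>
     (\<forall>t k. 2\<le>t \<longrightarrow> t\<le>T \<longrightarrow> t\<le>k \<longrightarrow> k\<le>T \<longrightarrow> k+1 \<le> t+L \<longrightarrow> \<not>p(t-1) \<longrightarrow> p t \<longrightarrow> p k)"
  proof -
    have "(- y (t - 1) + y t - y k \<le> 0) \<longleftrightarrow> (\<not>p(t-1) \<and> p t \<longrightarrow> p k)"
      if "t\<in>{2..T}" "k\<in>{t..T}" for t k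
      proof -
      have "t-1\<in>{1..T}" "t\<in>{1..T}" "k\<in>{1..T}" using that by auto
      thus ?thesis unfolding p_def by (intro key01) (use y01 in blast)+
    qed
    thus ?thesis using L by (auto simp: min_def)
  qed
  have B: "(\<forall>t\<in>{2..T}. \<forall>k\<in>{t..min T (t + L - 1)}. - y (T - t + 2) + y (T - t + 1) - y (T - k + 1) \<le> 0) \<longleftrightarrow>
     (\<forall>s j. 1\<le>j \<longrightarrow> j\<le>s \<longrightarrow> s<T \<longrightarrow> s+1 \<le> j+L \<longrightarrow> p s \<longrightarrow> \<not>p(s+1) \<longrightarrow> p j)"
  proof -
    have C: "(- y (T - t + 2) + y (T - t + 1) - y (T - k + 1) \<le> 0) \<longleftrightarrow>
        (\<not>p(T-t+2) \<and> p (T-t+1) \<longrightarrow> p (T-k+1))"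
      if "t\<in>{2..T}" "k\<in>{t..T}" for t k
      proof -
      have "T-t+2\<in>{1..T}" "T-t+1\<in>{1..T}" "T-k+1\<in>{1..T}" using that by auto
      thus ?thesis unfolding p_def by (intro key01) (use y01 in blast)+
    qed
    show ?thesis
    proof
      assume h: "\<forall>t\<in>{2..T}. \<forall>k\<in>{t..min T (t + L - 1)}. - y (T - t + 2) + y (T - t + 1) - y (T - k + 1) \<le> 0"
      show "\<forall>s j. 1\<le>j \<longrightarrow> j\<le>s \<longrightarrow> s<T \<longrightarrow> s+1 \<le> j+L \<longrightarrow> p s \<longrightarrow> \<not>p(s+1) \<longrightarrow> p j"
      proof (intro allI impI)
        fix s j assume a: "1\<le>j" "j\<le>s" "s<T" "s+1 \<le> j+L" "p s" "\<not>p(s+1)"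
        have t: "T-s+1 \<in> {2..T}" using a by auto
        have k: "T-j+1 \<in> {T-s+1..min T (T-s+1 + L - 1)}" using a L by auto
        have k': "T-j+1 \<in> {T-s+1..T}" using a L by auto
        have e: "T - (T-s+1) + 2 = s+1" "T - (T-s+1) + 1 = s" "T - (T-j+1) + 1 = j" using a by auto
        from h t k have "- y (T - (T-s+1) + 2) + y (T - (T-s+1) + 1) - y (T - (T-j+1) + 1) \<le> 0" by blast
        with C[OF t k'] e a show "p j" by simp
      qed
    next
      assume h: "\<forall>s j. 1\<le>j \<longrightarrow> j\<le>s \<longrightarrow> s<T \<longrightarrow> s+1 \<le> j+L \<longrightarrow> p s \<longrightarrow> \<not>p(s+1) \<longrightarrow> p j"
      show "\<forall>t\<in>{2..T}. \<forall>k\<in>{t..min T (t + L - 1)}. - y (T - t + 2) + y (T - t + 1) - y (T - k + 1) \<le> 0"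
      proof (intro ballI)
        fix t k assume t: "t\<in>{2..T}" and k: "k\<in>{t..min T (t + L - 1)}"
        have k': "k \<in> {t..T}" using k by auto
        have "p (T-k+1)" if "\<not>p(T-t+2)" "p (T-t+1)"
        proof -
          have e: "T-t+2 = (T-t+1)+1" by simp
          show ?thesis using h[rule_format, of "T-k+1" "T-t+1"] that t k L unfolding e by auto
        qed
        thus "- y (T - t + 2) + y (T - t + 1) - y (T - k + 1) \<le> 0" using C[OF t k'] by blast
      qed
    qed
  qed
  show ?thesis unfolding A B using fwd_bwd[of T L p] bwd_fwd[of T L p] by blast
qed


theorem lemma2:
  fixes T L l :: nat and Cup Clo V Vup :: real
  assumes "T > 0" and "L > 0" and "l > 0"
    and "Cup > Clo" and "Clo > 0" and "V > 0" and "Vup + V \<le> Cup"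
    and "Clo < Vup" and "Vup < Clo + V"
  shows "polP T L l Cup Clo V Vup = polP' T L l Cup Clo V Vup"
proof -
  have main: "(x, y) \<in> polP T L l Cup Clo V Vup \<longleftrightarrow> (x, y) \<in> polP' T L l Cup Clo V Vup"
    for x y :: "nat \<Rightarrow> real"
  proof (cases "\<forall>t\<in>{1..T}. x t \<ge> 0 \<and> y t \<in> {0, 1}")
    case False thus ?thesis unfolding polP_def polP'_def by auto
  next
    case True
    hence y01: "\<forall>t\<in>{1..T}. y t \<in> {0,1}" by auto
    define z where "z t = 1 - y t" for t
    have z01: "\<forall>t\<in>{1..T}. z t \<in> {0,1}" using y01 unfolding z_def by auto
    have U: "(\<forall>t\<in>{2..T}. \<forall>k\<in>{t..min T (t + L - 1)}. - y (t - 1) + y t - y k \<le> 0) \<longleftrightarrow>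
      (\<forall>t\<in>{2..T}. \<forall>k\<in>{t..min T (t + L - 1)}. - y (T - t + 2) + y (T - t + 1) - y (T - k + 1) \<le> 0)"
      by (rule minup_real[OF y01 assms(2)])
    have D0: "(\<forall>t\<in>{2..T}. \<forall>k\<in>{t..min T (t + l - 1)}. - z (t - 1) + z t - z k \<le> 0) \<longleftrightarrow>
      (\<forall>t\<in>{2..T}. \<forall>k\<in>{t..min T (t + l - 1)}. - z (T - t + 2) + z (T - t + 1) - z (T - k + 1) \<le> 0)"
      by (rule minup_real[OF z01 assms(3)])
    have e1: "(- z a + z b - z c \<le> 0) \<longleftrightarrow> (y a - y b + y c \<le> 1)" for a b c
      unfolding z_def by linarith
    have D: "(\<forall>t\<in>{2..T}. \<forall>k\<in>{t..min T (t + l - 1)}. y (t - 1) - y t + y k \<le> 1) \<longleftrightarrow>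
      (\<forall>t\<in>{2..T}. \<forall>k\<in>{t..min T (t + l - 1)}. y (T - t + 2) - y (T - t + 1) + y (T - k + 1) \<le> 1)"
      using D0 unfolding e1 .
    have Bd: "(\<forall>t\<in>{1..T}. - x (T - t + 1) + Clo * y (T - t + 1) \<le> 0 \<and>
        x (T - t + 1) - Cup * y (T - t + 1) \<le> 0) \<longleftrightarrow>
        (\<forall>t\<in>{1..T}. - x t + Clo * y t \<le> 0 \<and> x t - Cup * y t \<le> 0)"
      by (rule reidx1[where P = "\<lambda>s. - x s + Clo * y s \<le> 0 \<and> x s - Cup * y s \<le> 0"])
    have R1: "(\<forall>t\<in>{2..T}. x (T - t + 1) - x (T - t + 2)
        \<le> V * y (T - t + 2) + Vup * (1 - y (T - t + 2))) \<longleftrightarrow>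
        (\<forall>t\<in>{2..T}. x (t - 1) - x t \<le> V * y t + Vup * (1 - y t))"
      by (rule reidx2[where P = "\<lambda>a b. x a - x b \<le> V * y b + Vup * (1 - y b)"])
    have R2: "(\<forall>t\<in>{2..T}. x (T - t + 2) - x (T - t + 1)
        \<le> V * y (T - t + 1) + Vup * (1 - y (T - t + 1))) \<longleftrightarrow>
        (\<forall>t\<in>{2..T}. x t - x (t - 1) \<le> V * y (t - 1) + Vup * (1 - y (t - 1)))"
      by (rule reidx2[where P = "\<lambda>a b. x b - x a \<le> V * y a + Vup * (1 - y a)"])
    show ?thesis unfolding polP_def polP'_def mem_Collect_eq prod.case
      by (simp only: U D Bd[symmetric] R1[symmetric] R2[symmetric])
         (rule iffI; elim conjE; intro conjI; assumption)
  qed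
  show ?thesis
  proof (rule set_eqI)
    fix p :: "(nat \<Rightarrow> real) \<times> (nat \<Rightarrow> real)"
    obtain x y where "p = (x, y)" by (cases p)
    thus "p \<in> polP T L l Cup Clo V Vup \<longleftrightarrow> p \<in> polP' T L l Cup Clo V Vup" using main by simp
  qed
qed

end
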